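(* Let $\Lambda>\lambda>0$ and let $Q\subset\mathbb{R}^2$ be an open square, with Cartesian coordinates $(x,y)$ whose axes are parallel to the sides of $Q$. Let $\mu>0$ be the positive principal eigenvalue of $\mathcal{M}^+_{\lambda,\Lambda}$ in $Q$ and let $u$ be any corresponding principal eigenfunction, i.e. $-\mathcal{M}^+_{\lambda,\Lambda}(D^2u)=\mu u$ in $Q$, $u>0$ in $Q$, $u=0$ on $\partial Q$. Then $u$ is not a function of separable variables, i.e. there are no functions $f,g$ of one variable with $u(x,y)=f(x)\,g(y)$ in $Q$.
   Context: For $0<\lambda\le\Lambda$, the Pucci supremum operator is defined on $2\times 2$ real symmetric matrices $X$ by $\mathcal{M}^+_{\lambda,\Lambda}(X)=\lambda\sum_{e_i<0}e_i+\Lambda\sum_{e_i>0}e_i$, where $e_i$ are the eigenvalues of $X$. For a bounded Lipschitz domain $\Omega$, the positive principal eigenvalue is $\mu^+(\Omega)=\sup\{\mu\in\mathbb{R}:\exists\,\phi>0\text{ in }\Omega,\ \mathcal{M}^+_{\lambda,\Lambda}(D^2\phi)+\mu\phi\le 0\text{ in }\Omega\}$ (in the viscosity sense); there exists $\phi>0$ in $\Omega$ with $\mathcal{M}^+_{\lambda,\Lambda}(D^2\phi)+\mu^+(\Omega)\phi=0$ in $\Omega$, $\phi=0$ on $\partial\Omega$, called a principal eigenfunction. *)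

theory Defs
  imports "HOL-Analysis.Analysis"
begin

text \<open>A real symmetric 2x2 matrix is given by its entries [[p,q],[q,r]].\<close>

definition sym2_eig_lo :: "real \<Rightarrow> real \<Rightarrow> real \<Rightarrow> real" where
  "sym2_eig_lo p q r = (p + r) / 2 - sqrt (((p - r) / 2)^2 + q^2)"

definition sym2_eig_hi :: "real \<Rightarrow> real \<Rightarrow> real \<Rightarrow> real" where
  "sym2_eig_hi p q r = (p + r) / 2 + sqrt (((p - r) / 2)^2 + q^2)"

definition pucci_term :: "real \<Rightarrow> real \<Rightarrow> real \<Rightarrow> real" where
  "pucci_term lam Lam e = (if e < 0 then lam * e else if e > 0 then Lam * e else 0)"

definition pucci_plus :: "real \<Rightarrow> real \<Rightarrow> real \<Rightarrow> real \<Rightarrow> real \<Rightarrow> real" where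
  "pucci_plus lam Lam p q r =
     pucci_term lam Lam (sym2_eig_lo p q r) + pucci_term lam Lam (sym2_eig_hi p q r)"

definition C2_partials ::
  "(real \<times> real) set \<Rightarrow> (real \<times> real \<Rightarrow> real) \<Rightarrow> (real \<times> real \<Rightarrow> real)
     \<Rightarrow> (real \<times> real \<Rightarrow> real) \<Rightarrow> (real \<times> real \<Rightarrow> real) \<Rightarrow> bool" where
  "C2_partials S \<psi> \<psi>xx \<psi>xy \<psi>yy \<longleftrightarrow>
     (\<exists>\<psi>x \<psi>y \<psi>yx.
        continuous_on S \<psi> \<and> continuous_on S \<psi>x \<and> continuous_on S \<psi>y \<and>
        continuous_on S \<psi>xx \<and> continuous_on S \<psi>xy \<and> continuous_on S \<psi>yx \<and>
        continuous_on S \<psi>yy \<and>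
        (\<forall>x y. (x, y) \<in> S \<longrightarrow>
           ((\<lambda>t. \<psi> (t, y)) has_real_derivative \<psi>x (x, y)) (at x) \<and>
           ((\<lambda>t. \<psi> (x, t)) has_real_derivative \<psi>y (x, y)) (at y) \<and>
           ((\<lambda>t. \<psi>x (t, y)) has_real_derivative \<psi>xx (x, y)) (at x) \<and>
           ((\<lambda>t. \<psi>x (x, t)) has_real_derivative \<psi>xy (x, y)) (at y) \<and>
           ((\<lambda>t. \<psi>y (t, y)) has_real_derivative \<psi>yx (x, y)) (at x) \<and>
           ((\<lambda>t. \<psi>y (x, t)) has_real_derivative \<psi>yy (x, y)) (at y)))"

definition visc_super ::
  "real \<Rightarrow> real \<Rightarrow> real \<Rightarrow> (real \<times> real) set \<Rightarrow> (real \<times> real \<Rightarrow> real) \<Rightarrow> bool" where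
  "visc_super lam Lam \<mu> \<Omega> u \<longleftrightarrow>
     continuous_on \<Omega> u \<and>
     (\<forall>N \<psi> \<psi>xx \<psi>xy \<psi>yy z.
        open N \<and> z \<in> N \<and> N \<subseteq> \<Omega> \<and> C2_partials N \<psi> \<psi>xx \<psi>xy \<psi>yy \<and>
        (\<forall>w\<in>N. u w - \<psi> w \<ge> u z - \<psi> z)
        \<longrightarrow> pucci_plus lam Lam (\<psi>xx z) (\<psi>xy z) (\<psi>yy z) + \<mu> * u z \<le> 0)"

definition visc_sub ::
  "real \<Rightarrow> real \<Rightarrow> real \<Rightarrow> (real \<times> real) set \<Rightarrow> (real \<times> real \<Rightarrow> real) \<Rightarrow> bool" where
  "visc_sub lam Lam \<mu> \<Omega> u \<longleftrightarrow>
     continuous_on \<Omega> u \<and>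
     (\<forall>N \<psi> \<psi>xx \<psi>xy \<psi>yy z.
        open N \<and> z \<in> N \<and> N \<subseteq> \<Omega> \<and> C2_partials N \<psi> \<psi>xx \<psi>xy \<psi>yy \<and>
        (\<forall>w\<in>N. u w - \<psi> w \<le> u z - \<psi> z)
        \<longrightarrow> pucci_plus lam Lam (\<psi>xx z) (\<psi>xy z) (\<psi>yy z) + \<mu> * u z \<ge> 0)"

definition visc_solution ::
  "real \<Rightarrow> real \<Rightarrow> real \<Rightarrow> (real \<times> real) set \<Rightarrow> (real \<times> real \<Rightarrow> real) \<Rightarrow> bool" where
  "visc_solution lam Lam \<mu> \<Omega> u \<longleftrightarrow> visc_super lam Lam \<mu> \<Omega> u \<and> visc_sub lam Lam \<mu> \<Omega> u"

definition pucci_principal_eigenvalue ::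
  "real \<Rightarrow> real \<Rightarrow> (real \<times> real) set \<Rightarrow> real" where
  "pucci_principal_eigenvalue lam Lam \<Omega> =
     Sup {\<mu>. \<exists>\<phi>. (\<forall>z\<in>\<Omega>. \<phi> z > 0) \<and> visc_super lam Lam \<mu> \<Omega> \<phi>}"

end

theory Submission
  imports Defs
begin


definition cub :: "real \<Rightarrow> real \<Rightarrow> real \<Rightarrow> real \<Rightarrow> real \<Rightarrow> real \<Rightarrow> real" where
  "cub t0 c0 c1 c2 c3 t = c0 + c1*(t-t0) + c2*(t-t0)^2 + c3*(t-t0)^3"
definition cub1 :: "real \<Rightarrow> real \<Rightarrow> real \<Rightarrow> real \<Rightarrow> real \<Rightarrow> real \<Rightarrow> real" where
  "cub1 t0 c0 c1 c2 c3 t = c1 + 2*c2*(t-t0) + 3*c3*(t-t0)^2"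
definition cub2 :: "real \<Rightarrow> real \<Rightarrow> real \<Rightarrow> real \<Rightarrow> real \<Rightarrow> real \<Rightarrow> real" where
  "cub2 t0 c0 c1 c2 c3 t = 2*c2 + 6*c3*(t-t0)"

lemma cub_deriv: "(cub t0 c0 c1 c2 c3 has_real_derivative cub1 t0 c0 c1 c2 c3 t) (at t)"
  unfolding cub_def[abs_def] cub1_def
  by (auto intro!: derivative_eq_intros simp: power2_eq_square)

lemma cub1_deriv: "(cub1 t0 c0 c1 c2 c3 has_real_derivative cub2 t0 c0 c1 c2 c3 t) (at t)"
  unfolding cub2_def cub1_def[abs_def]
  by (auto intro!: derivative_eq_intros simp: power2_eq_square)

lemma cont_cub[continuous_intros]: "continuous_on S (\<lambda>z. cub t0 c0 c1 c2 c3 (h z))" if "continuous_on S h"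
  unfolding cub_def by (intro continuous_intros that)
lemma cont_cub1[continuous_intros]: "continuous_on S (\<lambda>z. cub1 t0 c0 c1 c2 c3 (h z))" if "continuous_on S h"
  unfolding cub1_def by (intro continuous_intros that)
lemma cont_cub2[continuous_intros]: "continuous_on S (\<lambda>z. cub2 t0 c0 c1 c2 c3 (h z))" if "continuous_on S h"
  unfolding cub2_def by (intro continuous_intros that)

lemma C2_prod:
  "C2_partials S (\<lambda>z. cub x0 p0 p1 p2 p3 (fst z) * cub y0 r0 r1 r2 r3 (snd z))
     (\<lambda>z. cub2 x0 p0 p1 p2 p3 (fst z) * cub y0 r0 r1 r2 r3 (snd z))
     (\<lambda>z. cub1 x0 p0 p1 p2 p3 (fst z) * cub1 y0 r0 r1 r2 r3 (snd z))
     (\<lambda>z. cub x0 p0 p1 p2 p3 (fst z) * cub2 y0 r0 r1 r2 r3 (snd z))"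
  unfolding C2_partials_def
  apply (rule exI[of _ "\<lambda>z. cub1 x0 p0 p1 p2 p3 (fst z) * cub y0 r0 r1 r2 r3 (snd z)"])
  apply (rule exI[of _ "\<lambda>z. cub x0 p0 p1 p2 p3 (fst z) * cub1 y0 r0 r1 r2 r3 (snd z)"])
  apply (rule exI[of _ "\<lambda>z. cub1 x0 p0 p1 p2 p3 (fst z) * cub1 y0 r0 r1 r2 r3 (snd z)"])
  apply (intro conjI allI impI continuous_intros continuous_on_fst continuous_on_snd continuous_on_id)
  apply (auto intro!: DERIV_cmult_right DERIV_cmult cub_deriv cub1_deriv)
  done

lemma eig_sum: "sym2_eig_lo p q r + sym2_eig_hi p q r = p + r"
  unfolding sym2_eig_lo_def sym2_eig_hi_def by simp

lemma eig_diff: "sym2_eig_hi p q r - sym2_eig_lo p q r \<ge> 2*\<bar>q\<bar>"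
proof -
  have "\<bar>q\<bar> = sqrt (q^2)" by simp
  also have "\<dots> \<le> sqrt (((p - r) / 2)^2 + q^2)" by (intro real_sqrt_le_mono) simp
  finally show ?thesis unfolding sym2_eig_lo_def sym2_eig_hi_def by simp
qed

lemma term_ge: assumes "0 < lam" "lam \<le> Lam" shows "pucci_term lam Lam e \<ge> lam * e \<and> pucci_term lam Lam e \<ge> Lam * e"
proof (cases "e < 0")
  case True
  then have "Lam * e \<le> lam * e" using assms by (simp add: mult_right_mono_neg)
  then show ?thesis using True unfolding pucci_term_def by simp
next
  case False
  then have "lam * e \<le> Lam * e" using assms by (simp add: mult_right_mono)
  then show ?thesis using False unfolding pucci_term_def by auto
qed

lemma pucci_P1: assumes "0 < lam" "lam \<le> Lam"
  shows "pucci_plus lam Lam p q r \<ge> (lam+Lam)/2*(p+r) + (Lam-lam)*\<bar>q\<bar>"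
proof -
  let ?l = "sym2_eig_lo p q r" and ?h = "sym2_eig_hi p q r"
  have "pucci_plus lam Lam p q r \<ge> lam * ?l + Lam * ?h"
    unfolding pucci_plus_def using term_ge[OF assms] by (meson add_mono)
  moreover have "lam * ?l + Lam * ?h = (lam+Lam)/2*(?l + ?h) + (Lam-lam)/2*(?h-?l)"
    by (simp add: field_simps)
  moreover have "(Lam-lam)/2*(?h-?l) \<ge> (Lam-lam)/2*(2*\<bar>q\<bar>)"
    using eig_diff[where p=p and q=q and r=r] assms by (intro mult_left_mono) auto
  ultimately show ?thesis using eig_sum[where p=p and q=q and r=r] by simp
qed

lemma pucci_P2: assumes "0 < lam" "lam \<le> Lam"
  shows "pucci_plus lam Lam p q r \<ge> lam*(p+r)"
  using term_ge[OF assms] eig_sum[where p=p and q=q and r=r] unfolding pucci_plus_def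
  by (metis add_mono distrib_left)

lemma pucci_diag1: "pucci_plus lam Lam p 0 0 = pucci_term lam Lam p"
proof -
  have s: "sqrt (((p - 0) / 2)^2 + 0^2) = \<bar>p\<bar>/2" by simp
  show ?thesis unfolding pucci_plus_def sym2_eig_lo_def sym2_eig_hi_def s
    by (cases "p < 0") (simp_all add: pucci_term_def)
qed

lemma pucci_diag2: "pucci_plus lam Lam 0 0 r = pucci_term lam Lam r"
proof -
  have s: "sqrt (((0 - r) / 2)^2 + 0^2) = \<bar>r\<bar>/2" by simp
  show ?thesis unfolding pucci_plus_def sym2_eig_lo_def sym2_eig_hi_def s
    by (cases "r < 0") (simp_all add: pucci_term_def)
qed

lemma term_lb: assumes "0 < lam" "X \<ge> 0" "pucci_term lam Lam e + X \<ge> 0" shows "e \<ge> -X/lam"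
proof (cases "e < 0")
  case True
  then have "lam * e + X \<ge> 0" using assms(3) unfolding pucci_term_def by simp
  then show ?thesis using assms(1) by (simp add: field_simps)
next
  case False then have "X/lam \<ge> 0" using assms by simp then show ?thesis using False by linarith
qed



lemma conv_mid:
  fixes h :: "real \<Rightarrow> real"
  assumes ab: "\<alpha> < \<beta>" and ch: "continuous_on {\<alpha>..\<beta>} h" and K: "K \<ge> 0"
   and H: "\<And>t1 c1 c2. t1 \<in> {\<alpha><..<\<beta>} \<Longrightarrow> (\<forall>t\<in>{\<alpha><..<\<beta>}. h t \<le> h t1 + c1*(t-t1) + c2*(t-t1)^2) \<Longrightarrow> -K \<le> 2*c2"
   and z: "z \<in> {\<alpha><..<\<beta>}"
  shows "h z \<le> h \<alpha> + (h \<beta> - h \<alpha>)/(\<beta>-\<alpha>)*(z-\<alpha>) + K/2*(z-\<alpha>)*(\<beta>-z)"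
proof (rule ccontr)
  assume neg: "\<not> ?thesis"
  define L where "L = (h \<beta> - h \<alpha>)/(\<beta>-\<alpha>)"
  define gap where "gap = h z - (h \<alpha> + L*(z-\<alpha>) + K/2*(z-\<alpha>)*(\<beta>-z))"
  have gap: "gap > 0" using neg unfolding gap_def L_def by simp
  have zpos: "(z-\<alpha>)*(\<beta>-z) > 0" using z by simp
  define \<epsilon> where "\<epsilon> = gap/(2*((z-\<alpha>)*(\<beta>-z)))"
  have eps: "\<epsilon> > 0" unfolding \<epsilon>_def using gap zpos by simp
  have eps2: "\<epsilon>*((z-\<alpha>)*(\<beta>-z)) = gap/2" unfolding \<epsilon>_def using zpos by (auto simp: field_simps)
  define k where "k = K/2+\<epsilon>"
  define E where "E = (\<lambda>t. h t - (h \<alpha> + L*(t-\<alpha>)) - k*(t-\<alpha>)*(\<beta>-t))"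
  have cE: "continuous_on {\<alpha>..\<beta>} E" unfolding E_def by (intro continuous_intros ch)
  obtain t1 where t1: "t1 \<in> {\<alpha>..\<beta>}" "\<forall>t\<in>{\<alpha>..\<beta>}. E t \<le> E t1"
    using continuous_attains_sup[OF compact_Icc _ cE] ab by auto
  have Ez0: "E z = gap - \<epsilon>*((z-\<alpha>)*(\<beta>-z))" unfolding E_def k_def gap_def by (simp add: field_simps)
  have Ez: "E z = gap/2" using Ez0 eps2 by simp
  have LL: "L*(\<beta>-\<alpha>) = h \<beta> - h \<alpha>" unfolding L_def using ab by simp
  have Ea: "E \<alpha> = 0" unfolding E_def by simp
  have Eb: "E \<beta> = 0" unfolding E_def using LL by simp
  have "E z \<le> E t1" using t1(2) z by auto
  then have "E t1 > 0" using Ez gap by linarith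
  then have t1o: "t1 \<in> {\<alpha><..<\<beta>}" using t1(1) Ea Eb by (cases "t1 = \<alpha>"; cases "t1 = \<beta>") auto
  have "\<forall>t\<in>{\<alpha><..<\<beta>}. h t \<le> h t1 + (L + k*(\<alpha>+\<beta>-2*t1))*(t-t1) + (-k)*(t-t1)^2"
  proof
    fix t assume t: "t \<in> {\<alpha><..<\<beta>}"
    have "E t \<le> E t1" using t1(2) t by auto
    moreover have "k*((t-\<alpha>)*(\<beta>-t)-(t1-\<alpha>)*(\<beta>-t1)) = k*(\<alpha>+\<beta>-2*t1)*(t-t1) - k*(t-t1)^2"
      by (simp add: algebra_simps power2_eq_square)
    ultimately show "h t \<le> h t1 + (L + k*(\<alpha>+\<beta>-2*t1))*(t-t1) + (-k)*(t-t1)^2"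
      unfolding E_def by (simp add: algebra_simps)
  qed
  from H[OF t1o this] show False unfolding k_def using eps by simp
qed

lemma quad_id: "k*(t-\<alpha>)*(\<alpha>+\<eta>-t) - k*(t1-\<alpha>)*(\<alpha>+\<eta>-t1) = k*(2*\<alpha>+\<eta>-2*t1)*(t-t1) - k*(t-t1)^2"
  for k t t1 \<alpha> \<eta> :: real
  by (simp add: algebra_simps power2_eq_square)

lemma touch_below:
  fixes h :: "real \<Rightarrow> real"
  assumes eta: "\<eta> > 0" and ch: "continuous_on {\<alpha>..\<alpha>+\<eta>} h" and h0: "h \<alpha> = 0"
    and mid: "h (\<alpha>+\<eta>/2) \<le> h(\<alpha>+\<eta>)/2 + K/8*\<eta>^2"
  shows "\<exists>t1\<in>{\<alpha><..<\<alpha>+\<eta>}. \<forall>t\<in>{\<alpha>..\<alpha>+\<eta>}.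
           h t1 + (h(\<alpha>+\<eta>)/\<eta> + K/2*(2*\<alpha>+\<eta>-2*t1))*(t-t1) - K/2*(t-t1)^2 \<le> h t"
proof -
  define p where "p = h(\<alpha>+\<eta>)/\<eta>"
  define D where "D = (\<lambda>t. h t - (p*(t-\<alpha>) + K/2*(t-\<alpha>)*(\<alpha>+\<eta>-t)))"
  have cD: "continuous_on {\<alpha>..\<alpha>+\<eta>} D" unfolding D_def by (intro continuous_intros ch)
  obtain tm where tm: "tm \<in> {\<alpha>..\<alpha>+\<eta>}" "\<forall>t\<in>{\<alpha>..\<alpha>+\<eta>}. D tm \<le> D t"
    using continuous_attains_inf[OF compact_Icc _ cD] eta by auto
  have Da: "D \<alpha> = 0" unfolding D_def using h0 by simp
  have Db: "D (\<alpha>+\<eta>) = 0" unfolding D_def p_def using eta by simp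
  have Dm: "D (\<alpha>+\<eta>/2) \<le> 0" using mid unfolding D_def p_def using eta
    by (simp add: field_simps power2_eq_square)
  obtain t1 where t1: "t1 \<in> {\<alpha><..<\<alpha>+\<eta>}" "\<forall>t\<in>{\<alpha>..\<alpha>+\<eta>}. D t1 \<le> D t"
  proof (cases "tm \<in> {\<alpha><..<\<alpha>+\<eta>}")
    case True then show ?thesis using that tm by blast
  next
    case False
    then have "tm = \<alpha> \<or> tm = \<alpha>+\<eta>" using tm(1) by auto
    then have "D tm = 0" using Da Db by auto
    then have "\<forall>t\<in>{\<alpha>..\<alpha>+\<eta>}. D (\<alpha>+\<eta>/2) \<le> D t" using tm(2) Dm by auto
    then show ?thesis using that[of "\<alpha>+\<eta>/2"] eta by auto
  qed
  show ?thesis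
  proof (rule bexI[OF _ t1(1)], rule ballI)
    fix t assume t: "t \<in> {\<alpha>..\<alpha>+\<eta>}"
    have Dle: "D t1 \<le> D t" using t1(2) t by auto
    have idq: "(t-\<alpha>)*(\<alpha>+\<eta>-t)-(t1-\<alpha>)*(\<alpha>+\<eta>-t1) = (2*\<alpha>+\<eta>-2*t1)*(t-t1) - (t-t1)^2"
      by (simp add: algebra_simps power2_eq_square)
    have e2: "K/2*(t-\<alpha>)*(\<alpha>+\<eta>-t) - K/2*(t1-\<alpha>)*(\<alpha>+\<eta>-t1) = K/2*(2*\<alpha>+\<eta>-2*t1)*(t-t1) - K/2*(t-t1)^2"
      by (rule quad_id)
    have e3: "p*(t-\<alpha>) - p*(t1-\<alpha>) = p*(t-t1)" by (simp add: algebra_simps)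
    show "h t1 + (h(\<alpha>+\<eta>)/\<eta> + K/2*(2*\<alpha>+\<eta>-2*t1))*(t-t1) - K/2*(t-t1)^2 \<le> h t"
      using Dle e2 e3 unfolding D_def p_def[symmetric] by (simp add: algebra_simps)
  qed
qed

lemma hopf:
  fixes h :: "real \<Rightarrow> real"
  assumes e1: "\<eta>1 > 0" and ch: "continuous_on {\<alpha>..\<alpha>+\<eta>1} h" and h0: "h \<alpha> = 0"
    and hpos: "\<forall>t\<in>{\<alpha><..\<alpha>+\<eta>1}. h t > 0" and K: "K > 0"
    and H: "\<And>e t1 c1 c2 c3. 0 < e \<Longrightarrow> e \<le> \<eta>1 \<Longrightarrow> t1 \<in> {\<alpha><..<\<alpha>+e} \<Longrightarrow>
        (\<forall>t\<in>{\<alpha><..<\<alpha>+e}. h t1 + c1*(t-t1) + c2*(t-t1)^2 + c3*(t-t1)^3 \<le> h t) \<Longrightarrow> 2*c2 \<le> K * h t1"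
  shows "\<exists>c>0. \<exists>\<eta>0>0. \<eta>0 \<le> \<eta>1 \<and> (\<forall>t\<in>{\<alpha>..\<alpha>+\<eta>0}. c*(t-\<alpha>) \<le> h t)"
proof -
  define \<eta>0 where "\<eta>0 = min \<eta>1 (1/(K+1))"
  have e0: "\<eta>0 > 0" "\<eta>0 \<le> \<eta>1" "\<eta>0 \<le> 1/(K+1)" unfolding \<eta>0_def using e1 K by auto
  define w where "w = (\<lambda>t. (t-\<alpha>) + K*(t-\<alpha>)^3)"
  have wge: "t-\<alpha> \<le> w t" if "t \<ge> \<alpha>" for t unfolding w_def using K that by simp
  have wpos: "w (\<alpha>+\<eta>0) > 0" using wge[of "\<alpha>+\<eta>0"] e0 by simp
  have hp: "h (\<alpha>+\<eta>0) > 0" using hpos e0 by auto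
  define c where "c = h(\<alpha>+\<eta>0)/w(\<alpha>+\<eta>0)"
  have c: "c > 0" unfolding c_def using wpos hp by simp
  have main: "\<forall>t\<in>{\<alpha>..\<alpha>+\<eta>0}. c * w t \<le> h t"
  proof (rule ccontr)
    assume neg: "\<not> ?thesis"
    define D where "D = (\<lambda>t. h t - c * w t)"
    have cD: "continuous_on {\<alpha>..\<alpha>+\<eta>0} D" unfolding D_def w_def
      by (intro continuous_intros continuous_on_subset[OF ch]) (use e0 in auto)
    obtain t1 where t1: "t1 \<in> {\<alpha>..\<alpha>+\<eta>0}" "\<forall>t\<in>{\<alpha>..\<alpha>+\<eta>0}. D t1 \<le> D t"
      using continuous_attains_inf[OF compact_Icc _ cD] e0 by auto
    have "D t1 < 0" using neg t1(2) unfolding D_def by force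
    moreover have "D \<alpha> = 0" unfolding D_def w_def using h0 by simp
    moreover have "D (\<alpha>+\<eta>0) = 0" unfolding D_def c_def using wpos by simp
    ultimately have t1o: "t1 \<in> {\<alpha><..<\<alpha>+\<eta>0}" and Dneg: "D t1 < 0" using t1(1)
      by (cases "t1 = \<alpha>"; cases "t1 = \<alpha>+\<eta>0"; auto)+
    define X where "X = t1 - \<alpha>"
    have X: "0 < X" "X < \<eta>0" using t1o unfolding X_def by auto
    have "\<forall>t\<in>{\<alpha><..<\<alpha>+\<eta>0}. h t1 + (c*(1+3*K*X^2))*(t-t1) + (c*(3*K*X))*(t-t1)^2 + (c*K)*(t-t1)^3 \<le> h t"
    proof
      fix t assume t: "t \<in> {\<alpha><..<\<alpha>+\<eta>0}"
      have "D t1 \<le> D t" using t1(2) t by auto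
      moreover have "c*(w t - w t1) = (c*(1+3*K*X^2))*(t-t1) + (c*(3*K*X))*(t-t1)^2 + (c*K)*(t-t1)^3"
        unfolding w_def X_def by (simp add: algebra_simps power2_eq_square power3_eq_cube)
      ultimately show "h t1 + (c*(1+3*K*X^2))*(t-t1) + (c*(3*K*X))*(t-t1)^2 + (c*K)*(t-t1)^3 \<le> h t"
        unfolding D_def by (simp add: algebra_simps)
    qed
    from H[OF e0(1) e0(2) t1o this] have A: "2*(c*(3*K*X)) \<le> K * h t1" .
    have "h t1 < c * w t1" using Dneg unfolding D_def by simp
    then have "K * h t1 < K * (c * w t1)" using K by simp
    with A have "c*K*(6*X) < c*K*(X + K*X^3)" unfolding w_def X_def by (simp add: algebra_simps)
    then have "6*X < X + K*X^3" using c K by (simp add: mult_less_cancel_left_pos)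
    then have "5*X < X*(K*X^2)" by (simp add: algebra_simps power2_eq_square power3_eq_cube)
    then have B: "5 < K*X^2" using X by (simp add: mult.commute mult_less_cancel_left_pos)
    have "X*(K+1) < \<eta>0*(K+1)" using X K by (intro mult_strict_right_mono) auto
    moreover have "\<eta>0*(K+1) \<le> 1" using e0(3) K by (simp add: field_simps)
    ultimately have "X*(K+1) < 1" by linarith
    then have "(X*(K+1))^2 < 1" using X K by (simp add: power_less_one_iff abs_square_less_1)
    moreover have "K*X^2 \<le> (X*(K+1))^2" using K by (simp add: power2_eq_square algebra_simps)
    ultimately show False using B by simp
  qed
  have "\<forall>t\<in>{\<alpha>..\<alpha>+\<eta>0}. c*(t-\<alpha>) \<le> h t"
  proof
    fix t assume t: "t \<in> {\<alpha>..\<alpha>+\<eta>0}"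
    then have "c*(t-\<alpha>) \<le> c * w t" using wge c by simp
    then show "c*(t-\<alpha>) \<le> h t" using main t by force
  qed
  then show ?thesis using c e0 by blast
qed



lemma cub_simps[simp]:
  "cub t0 c0 c1 c2 c3 t0 = c0" "cub1 t0 c0 c1 c2 c3 t0 = c1" "cub2 t0 c0 c1 c2 c3 t0 = 2*c2"
  "cub t0 c 0 0 0 t = c" "cub1 t0 c 0 0 0 t = 0" "cub2 t0 c 0 0 0 t = 0"
  by (simp_all add: cub_def cub1_def cub2_def)

lemma super_prod:
  assumes "visc_super lam Lam \<mu> Q u" "open N" "z\<in>N" "N\<subseteq>Q"
    "\<forall>w\<in>N. u z - cub x0 p0 p1 p2 p3 (fst z) * cub y0 r0 r1 r2 r3 (snd z) \<le> u w - cub x0 p0 p1 p2 p3 (fst w) * cub y0 r0 r1 r2 r3 (snd w)"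
  shows "pucci_plus lam Lam (cub2 x0 p0 p1 p2 p3 (fst z) * cub y0 r0 r1 r2 r3 (snd z))
          (cub1 x0 p0 p1 p2 p3 (fst z) * cub1 y0 r0 r1 r2 r3 (snd z))
          (cub x0 p0 p1 p2 p3 (fst z) * cub2 y0 r0 r1 r2 r3 (snd z)) + \<mu> * u z \<le> 0"
proof -
  have H: "\<forall>N \<psi> \<psi>xx \<psi>xy \<psi>yy z.
        open N \<and> z \<in> N \<and> N \<subseteq> Q \<and> C2_partials N \<psi> \<psi>xx \<psi>xy \<psi>yy \<and>
        (\<forall>w\<in>N. u w - \<psi> w \<ge> u z - \<psi> z)
        \<longrightarrow> pucci_plus lam Lam (\<psi>xx z) (\<psi>xy z) (\<psi>yy z) + \<mu> * u z \<le> 0"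
    using assms(1) unfolding visc_super_def by blast
  show ?thesis
    using H[rule_format, OF conjI[OF assms(2) conjI[OF assms(3) conjI[OF assms(4) conjI[OF C2_prod assms(5)]]]]] .
qed

lemma sub_prod:
  assumes "visc_sub lam Lam \<mu> Q u" "open N" "z\<in>N" "N\<subseteq>Q"
    "\<forall>w\<in>N. u w - cub x0 p0 p1 p2 p3 (fst w) * cub y0 r0 r1 r2 r3 (snd w) \<le> u z - cub x0 p0 p1 p2 p3 (fst z) * cub y0 r0 r1 r2 r3 (snd z)"
  shows "pucci_plus lam Lam (cub2 x0 p0 p1 p2 p3 (fst z) * cub y0 r0 r1 r2 r3 (snd z))
          (cub1 x0 p0 p1 p2 p3 (fst z) * cub1 y0 r0 r1 r2 r3 (snd z))
          (cub x0 p0 p1 p2 p3 (fst z) * cub2 y0 r0 r1 r2 r3 (snd z)) + \<mu> * u z \<ge> 0"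
proof -
  have H: "\<forall>N \<psi> \<psi>xx \<psi>xy \<psi>yy z.
        open N \<and> z \<in> N \<and> N \<subseteq> Q \<and> C2_partials N \<psi> \<psi>xx \<psi>xy \<psi>yy \<and>
        (\<forall>w\<in>N. u w - \<psi> w \<le> u z - \<psi> z)
        \<longrightarrow> pucci_plus lam Lam (\<psi>xx z) (\<psi>xy z) (\<psi>yy z) + \<mu> * u z \<ge> 0"
    using assms(1) unfolding visc_sub_def by blast
  show ?thesis
    using H[rule_format, OF conjI[OF assms(2) conjI[OF assms(3) conjI[OF assms(4) conjI[OF C2_prod assms(5)]]]]] .
qed



theorem proposition2p1:
  fixes lam Lam a b s \<mu> :: real
    and Q :: "(real \<times> real) set"
    and u :: "real \<times> real \<Rightarrow> real"
  assumes "0 < lam" and "lam < Lam"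
    and "0 < s" and "Q = {a<..<a + s} \<times> {b<..<b + s}"
    and "0 < \<mu>" and "\<mu> = pucci_principal_eigenvalue lam Lam Q"
    and "continuous_on (closure Q) u"
    and "\<forall>z\<in>Q. u z > 0"
    and "\<forall>z\<in>frontier Q. u z = 0"
    and "visc_solution lam Lam \<mu> Q u"
  shows "\<not> (\<exists>f g :: real \<Rightarrow> real. \<forall>x y. (x, y) \<in> Q \<longrightarrow> u (x, y) = f x * g y)"
proof
  assume "\<exists>f g :: real \<Rightarrow> real. \<forall>x y. (x, y) \<in> Q \<longrightarrow> u (x, y) = f x * g y"
  then obtain f g :: "real \<Rightarrow> real" where fg: "\<And>x y. (x, y) \<in> Q \<Longrightarrow> u (x, y) = f x * g y" by blast
  note lam = assms(1) and lL = assms(2) and s = assms(3) and Qd = assms(4) and mu = assms(5)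
  note cu0 = assms(7) and upos = assms(8) and ufr = assms(9)
  have vsup: "visc_super lam Lam \<mu> Q u" and vsub: "visc_sub lam Lam \<mu> Q u"
    using assms(10) unfolding visc_solution_def by auto
  define A where "A = {a..a+s} \<times> {b..b+s}"
  have clQ: "closure Q = A" unfolding Qd A_def using s by (simp add: closure_Times)
  have opQ: "open Q" unfolding Qd by (simp add: open_Times)
  have frQ: "frontier Q = A - Q" unfolding frontier_def interior_open[OF opQ] clQ ..
  have cu: "continuous_on A u" using cu0 clQ by simp
  have QA: "Q \<subseteq> A" unfolding Qd A_def by auto
  obtain zs where zs: "zs \<in> A" "\<forall>z\<in>A. u z \<le> u zs"
    using continuous_attains_sup[OF _ _ cu] unfolding A_def using s
    by (metis compact_Icc compact_Times empty_iff mem_Sigma_iff atLeastAtMost_iff less_eq_real_def add_increasing2)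
  define m where "m = u zs"
  have zc: "(a+s/2, b+s/2) \<in> Q" unfolding Qd using s by auto
  have m: "m > 0" using zs(2) QA zc upos unfolding m_def by (smt (verit) subsetD)
  have zsQ: "zs \<in> Q"
  proof (rule ccontr)
    assume "zs \<notin> Q" then have "zs \<in> frontier Q" using frQ zs(1) by auto
    then show False using ufr m unfolding m_def by auto
  qed
  define xs where "xs = fst zs"
  define ys where "ys = snd zs"
  have xs: "a < xs" "xs < a+s" and ys: "b < ys" "ys < b+s" using zsQ unfolding Qd xs_def ys_def by (auto simp: mem_Times_iff)
  have zs_eq: "zs = (xs, ys)" unfolding xs_def ys_def by simp
  define fx where "fx = (\<lambda>x. u (x, ys))"
  define gy where "gy = (\<lambda>y. u (xs, y) / m)"
  have sep: "u (x, y) = fx x * gy y" if "(x, y) \<in> Q" for x y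
  proof -
    have q1: "(x, ys) \<in> Q" "(xs, y) \<in> Q" using that zsQ unfolding Qd zs_eq by auto
    have "u (x, y) * m = fx x * u (xs, y)"
      unfolding fx_def m_def zs_eq using fg[OF that] fg[OF q1(1)] fg[OF q1(2)] fg[OF zsQ[unfolded zs_eq]]
      by (simp add: algebra_simps)
    then show ?thesis unfolding gy_def using m by (simp add: field_simps)
  qed
  have cfx: "continuous_on {a..a+s} fx" unfolding fx_def
    by (rule continuous_on_compose2[OF cu, where f="\<lambda>x. (x, ys)"]) (use ys in \<open>auto intro!: continuous_intros simp: A_def\<close>)
  have cgy: "continuous_on {b..b+s} gy" unfolding gy_def
    by (intro continuous_intros continuous_on_compose2[OF cu, where f="\<lambda>y. (xs, y)"]) (use xs m in \<open>auto intro!: continuous_intros simp: A_def\<close>)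
  have fxpos: "fx x > 0" if "x \<in> {a<..<a+s}" for x using upos that ys unfolding fx_def Qd by auto
  have gypos: "gy y > 0" if "y \<in> {b<..<b+s}" for y using upos that xs m unfolding gy_def Qd by auto
  have ufr': "u z = 0" if "z \<in> A" "z \<notin> Q" for z using ufr frQ that by auto
  have fx0: "fx a = 0" "fx (a+s) = 0" using ufr'[of "(a,ys)"] ufr'[of "(a+s,ys)"] ys s unfolding fx_def A_def Qd by auto
  have gy0: "gy b = 0" "gy (b+s) = 0" using ufr'[of "(xs,b)"] ufr'[of "(xs,b+s)"] xs s unfolding gy_def A_def Qd by auto
  have fxm: "fx x \<le> m" if "x \<in> {a..a+s}" for x using zs(2) that ys unfolding fx_def m_def A_def by auto
  have gy1: "gy y \<le> 1" if "y \<in> {b..b+s}" for y using zs(2) that xs m unfolding gy_def m_def A_def by auto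
  have fxnn: "fx x \<ge> 0" if "x \<in> {a..a+s}" for x
    using that fxpos fx0 by (cases "x = a \<or> x = a+s") (auto simp: less_eq_real_def)
  have gynn: "gy y \<ge> 0" if "y \<in> {b..b+s}" for y
    using that gypos gy0 by (cases "y = b \<or> y = b+s") (auto simp: less_eq_real_def)

  define Kf where "Kf = \<mu>*m/lam"
  define Kg where "Kg = \<mu>/lam"
  have Kf: "Kf \<ge> 0" and Kg: "Kg \<ge> 0" unfolding Kf_def Kg_def using mu m lam by auto
  have Cf: "-Kf \<le> 2*c2" if ab: "a \<le> \<alpha>" "\<beta> \<le> a+s" and t1: "t1 \<in> {\<alpha><..<\<beta>}"
    and H: "\<forall>t\<in>{\<alpha><..<\<beta>}. fx t \<le> fx t1 + c1*(t-t1) + c2*(t-t1)^2" for \<alpha> \<beta> t1 c1 c2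
  proof -
    define N where "N = {\<alpha><..<\<beta>} \<times> {b<..<b+s}"
    have N: "open N" "(t1, ys) \<in> N" "N \<subseteq> Q" unfolding N_def Qd using t1 ys ab by (auto simp: open_Times)
    have "\<forall>w\<in>N. u w - cub t1 (fx t1) c1 c2 0 (fst w) * cub 0 1 0 0 0 (snd w)
                 \<le> u (t1,ys) - cub t1 (fx t1) c1 c2 0 (fst (t1,ys)) * cub 0 1 0 0 0 (snd (t1,ys))"
    proof
      fix w assume w: "w \<in> N"
      obtain x y where wxy: "w = (x,y)" by fastforce
      have x: "x \<in> {\<alpha><..<\<beta>}" and y: "y \<in> {b<..<b+s}" using w unfolding wxy N_def by auto
      have "u w = fx x * gy y" unfolding wxy using N(3) w wxy by (intro sep) auto
      also have "\<dots> \<le> fx x * 1" using gy1[of y] y fxnn[of x] x ab by (intro mult_left_mono) auto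
      also have "\<dots> \<le> cub t1 (fx t1) c1 c2 0 x" using H x by (simp add: cub_def)
      finally show "u w - cub t1 (fx t1) c1 c2 0 (fst w) * cub 0 1 0 0 0 (snd w)
                 \<le> u (t1,ys) - cub t1 (fx t1) c1 c2 0 (fst (t1,ys)) * cub 0 1 0 0 0 (snd (t1,ys))"
        unfolding wxy fx_def by simp
    qed
    from sub_prod[OF vsub N this]
    have "pucci_term lam Lam (2*c2) + \<mu> * fx t1 \<ge> 0" by (simp add: pucci_diag1 fx_def)
    then have "2*c2 \<ge> -(\<mu> * fx t1)/lam" using term_lb[OF lam] fxnn[of t1] mu t1 ab by auto
    moreover have "\<mu> * fx t1/lam \<le> \<mu>*m/lam" using fxm[of t1] t1 ab mu lam
      by (intro divide_right_mono mult_left_mono) auto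
    ultimately show ?thesis unfolding Kf_def by simp
  qed
  have Cg: "-Kg \<le> 2*c2" if ab: "b \<le> \<alpha>" "\<beta> \<le> b+s" and t1: "t1 \<in> {\<alpha><..<\<beta>}"
    and H: "\<forall>t\<in>{\<alpha><..<\<beta>}. gy t \<le> gy t1 + c1*(t-t1) + c2*(t-t1)^2" for \<alpha> \<beta> t1 c1 c2
  proof -
    define N where "N = {a<..<a+s} \<times> {\<alpha><..<\<beta>}"
    have N: "open N" "(xs, t1) \<in> N" "N \<subseteq> Q" unfolding N_def Qd using t1 xs ab by (auto simp: open_Times)
    have uz: "u (xs, t1) = m * gy t1" unfolding gy_def using m by simp
    have "\<forall>w\<in>N. u w - cub 0 m 0 0 0 (fst w) * cub t1 (gy t1) c1 c2 0 (snd w)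
                 \<le> u (xs,t1) - cub 0 m 0 0 0 (fst (xs,t1)) * cub t1 (gy t1) c1 c2 0 (snd (xs,t1))"
    proof
      fix w assume w: "w \<in> N"
      obtain x y where wxy: "w = (x,y)" by fastforce
      have x: "x \<in> {a<..<a+s}" and y: "y \<in> {\<alpha><..<\<beta>}" using w unfolding wxy N_def by auto
      have "u w = fx x * gy y" unfolding wxy using N(3) w wxy by (intro sep) auto
      also have "\<dots> \<le> m * gy y" using fxm[of x] x gynn[of y] y ab by (intro mult_right_mono) auto
      also have "\<dots> \<le> m * cub t1 (gy t1) c1 c2 0 y" using H y m by (simp add: cub_def)
      finally show "u w - cub 0 m 0 0 0 (fst w) * cub t1 (gy t1) c1 c2 0 (snd w)
                 \<le> u (xs,t1) - cub 0 m 0 0 0 (fst (xs,t1)) * cub t1 (gy t1) c1 c2 0 (snd (xs,t1))"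
        unfolding wxy uz by simp
    qed
    from sub_prod[OF vsub N this]
    have "pucci_term lam Lam (m*(2*c2)) + \<mu> * (m * gy t1) \<ge> 0" unfolding uz by (simp add: pucci_diag2)
    then have "m*(2*c2) \<ge> -(\<mu> * (m * gy t1))/lam" using term_lb[OF lam] gynn[of t1] mu t1 ab m by auto
    then have "m*(2*c2) \<ge> m*(-(\<mu> * gy t1)/lam)" by (simp add: mult.left_commute)
    then have "-(\<mu> * gy t1)/lam \<le> 2*c2" by (rule mult_left_le_imp_le) (use m in auto)
    moreover have "\<mu> * gy t1/lam \<le> \<mu>/lam" using gy1[of t1] t1 ab mu lam
      by (intro divide_right_mono) auto
    ultimately show ?thesis unfolding Kg_def by simp
  qed

  have Tf: "\<exists>t1\<in>{a<..<a+\<eta>}. \<forall>t\<in>{a..a+\<eta>}. fx t1 + (fx(a+\<eta>)/\<eta> + Kf/2*(2*a+\<eta>-2*t1))*(t-t1) - Kf/2*(t-t1)^2 \<le> fx t"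
    if e: "0 < \<eta>" "\<eta> \<le> s" for \<eta>
  proof -
    have c: "continuous_on {a..a+\<eta>} fx" by (rule continuous_on_subset[OF cfx]) (use e in auto)
    have "fx (a+\<eta>/2) \<le> fx a + (fx (a+\<eta>) - fx a)/(a+\<eta>-a)*(a+\<eta>/2-a) + Kf/2*(a+\<eta>/2-a)*(a+\<eta>-(a+\<eta>/2))"
      by (rule conv_mid[OF _ c Kf]) (use e in \<open>auto intro: Cf[of a "a+\<eta>"]\<close>)
    also have "\<dots> = fx(a+\<eta>)/2 + Kf/8*\<eta>^2" using e fx0 by (simp add: field_simps power2_eq_square)
    finally show ?thesis by (rule touch_below[OF e(1) c fx0(1)])
  qed
  have Tg: "\<exists>t1\<in>{b<..<b+\<eta>}. \<forall>t\<in>{b..b+\<eta>}. gy t1 + (gy(b+\<eta>)/\<eta> + Kg/2*(2*b+\<eta>-2*t1))*(t-t1) - Kg/2*(t-t1)^2 \<le> gy t"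
    if e: "0 < \<eta>" "\<eta> \<le> s" for \<eta>
  proof -
    have c: "continuous_on {b..b+\<eta>} gy" by (rule continuous_on_subset[OF cgy]) (use e in auto)
    have "gy (b+\<eta>/2) \<le> gy b + (gy (b+\<eta>) - gy b)/(b+\<eta>-b)*(b+\<eta>/2-b) + Kg/2*(b+\<eta>/2-b)*(b+\<eta>-(b+\<eta>/2))"
      by (rule conv_mid[OF _ c Kg]) (use e in \<open>auto intro: Cg[of b "b+\<eta>"]\<close>)
    also have "\<dots> = gy(b+\<eta>)/2 + Kg/8*\<eta>^2" using e gy0 by (simp add: field_simps power2_eq_square)
    finally show ?thesis by (rule touch_below[OF e(1) c gy0(1)])
  qed

  obtain y1 where y1: "y1 \<in> {b<..<b+s}" "\<forall>t\<in>{b..b+s}. gy y1 + (gy(b+s)/s + Kg/2*(2*b+s-2*y1))*(t-y1) - Kg/2*(t-y1)^2 \<le> gy t"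
    using Tg[OF s order_refl] by blast
  define r1 where "r1 = gy(b+s)/s + Kg/2*(2*b+s-2*y1)"
  define R where "R = cub y1 (gy y1) r1 (-Kg/2) 0"
  have Rle: "R t \<le> gy t" if "t \<in> {b..b+s}" for t using y1(2) that unfolding R_def r1_def cub_def by auto
  have cR: "continuous_on UNIV R" unfolding R_def cub_def by (intro continuous_intros)
  have gyy1: "gy y1 > 0" using gypos y1(1) by auto
  have oR: "open {y. 0 < R y}" using open_Collect_less[OF continuous_on_const cR] .
  define Khf where "Khf = Kg/gy y1 + 1"
  have Khf: "Khf > 0" unfolding Khf_def using Kg gyy1 by (simp add: add_nonneg_pos)
  have Hf: "2*c2 \<le> Khf * fx t1" if e: "0 < e" "e \<le> s/2" and t1: "t1 \<in> {a<..<a+e}"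
    and H: "\<forall>t\<in>{a<..<a+e}. fx t1 + c1*(t-t1) + c2*(t-t1)^2 + c3*(t-t1)^3 \<le> fx t" for e t1 c1 c2 c3
  proof -
    define N where "N = {a<..<a+e} \<times> ({b<..<b+s} \<inter> {y. 0 < R y})"
    have N0: "open N" unfolding N_def by (intro open_Times open_Int oR open_greaterThanLessThan)
    have N: "open N" "(t1, y1) \<in> N" "N \<subseteq> Q" using N0 unfolding N_def Qd using t1 y1 e gyy1
      by (auto simp: R_def)
    have "\<forall>w\<in>N. u (t1,y1) - cub t1 (fx t1) c1 c2 c3 (fst (t1,y1)) * cub y1 (gy y1) r1 (-Kg/2) 0 (snd (t1,y1))
              \<le> u w - cub t1 (fx t1) c1 c2 c3 (fst w) * cub y1 (gy y1) r1 (-Kg/2) 0 (snd w)"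
    proof
      fix w assume w: "w \<in> N"
      obtain x y where wxy: "w = (x,y)" by fastforce
      have x: "x \<in> {a<..<a+e}" and y: "y \<in> {b<..<b+s}" and Ry: "R y > 0" using w unfolding wxy N_def by auto
      have "cub t1 (fx t1) c1 c2 c3 x * R y \<le> fx x * R y"
        using H x Ry by (intro mult_right_mono) (auto simp: cub_def)
      also have "\<dots> \<le> fx x * gy y" using Rle[of y] y fxnn[of x] x e by (intro mult_left_mono) auto
      also have "\<dots> = u w" unfolding wxy using N(3) w wxy by (intro sep[symmetric]) auto
      finally show "u (t1,y1) - cub t1 (fx t1) c1 c2 c3 (fst (t1,y1)) * cub y1 (gy y1) r1 (-Kg/2) 0 (snd (t1,y1))
              \<le> u w - cub t1 (fx t1) c1 c2 c3 (fst w) * cub y1 (gy y1) r1 (-Kg/2) 0 (snd w)"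
        using sep[of t1 y1] N(2,3) unfolding wxy R_def by auto
    qed
    from super_prod[OF vsup N this]
    have P: "pucci_plus lam Lam (2*c2*gy y1) (c1*r1) (fx t1 * (-Kg)) + \<mu>*(fx t1*gy y1) \<le> 0"
      using sep[of t1 y1] N(2,3) by auto
    have "lam*(2*c2*gy y1 + fx t1 * (-Kg)) \<le> pucci_plus lam Lam (2*c2*gy y1) (c1*r1) (fx t1 * (-Kg))"
      by (rule pucci_P2) (use lam lL in auto)
    moreover have "\<mu>*(fx t1*gy y1) \<ge> 0" using mu fxnn[of t1] t1 e gyy1 by auto
    ultimately have "lam*(2*c2*gy y1 + fx t1 * (-Kg)) \<le> 0" using P by linarith
    then have "2*c2*gy y1 \<le> fx t1 * Kg" using lam by (simp add: mult_le_0_iff)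
    then have "2*c2 \<le> fx t1 * Kg / gy y1" using gyy1 by (simp add: field_simps)
    also have "\<dots> \<le> Khf * fx t1" unfolding Khf_def using fxnn[of t1] t1 e gyy1 by (simp add: field_simps)
    finally show ?thesis .
  qed
  obtain cf \<eta>f where cf: "cf > 0" "\<eta>f > 0" "\<eta>f \<le> s/2" "\<forall>t\<in>{a..a+\<eta>f}. cf*(t-a) \<le> fx t"
    using hopf[of "s/2" a fx Khf] s continuous_on_subset[OF cfx] fx0 fxpos Khf Hf by (force)

  obtain x1 where x1: "x1 \<in> {a<..<a+s}" "\<forall>t\<in>{a..a+s}. fx x1 + (fx(a+s)/s + Kf/2*(2*a+s-2*x1))*(t-x1) - Kf/2*(t-x1)^2 \<le> fx t"
    using Tf[OF s order_refl] by blast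
  define q1 where "q1 = fx(a+s)/s + Kf/2*(2*a+s-2*x1)"
  define Rf where "Rf = cub x1 (fx x1) q1 (-Kf/2) 0"
  have Rfle: "Rf t \<le> fx t" if "t \<in> {a..a+s}" for t using x1(2) that unfolding Rf_def q1_def cub_def by auto
  have cRf: "continuous_on UNIV Rf" unfolding Rf_def cub_def by (intro continuous_intros)
  have fxx1: "fx x1 > 0" using fxpos x1(1) by auto
  have oRf: "open {x. 0 < Rf x}" using open_Collect_less[OF continuous_on_const cRf] .
  define Khg where "Khg = Kf/fx x1 + 1"
  have Khg: "Khg > 0" unfolding Khg_def using Kf fxx1 by (simp add: add_nonneg_pos)
  have Hg: "2*c2 \<le> Khg * gy t1" if e: "0 < e" "e \<le> s/2" and t1: "t1 \<in> {b<..<b+e}"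
    and H: "\<forall>t\<in>{b<..<b+e}. gy t1 + c1*(t-t1) + c2*(t-t1)^2 + c3*(t-t1)^3 \<le> gy t" for e t1 c1 c2 c3
  proof -
    define N where "N = ({a<..<a+s} \<inter> {x. 0 < Rf x}) \<times> {b<..<b+e}"
    have N0: "open N" unfolding N_def by (intro open_Times open_Int oRf open_greaterThanLessThan)
    have N: "open N" "(x1, t1) \<in> N" "N \<subseteq> Q" using N0 unfolding N_def Qd using t1 x1 e fxx1
      by (auto simp: Rf_def)
    have "\<forall>w\<in>N. u (x1,t1) - cub x1 (fx x1) q1 (-Kf/2) 0 (fst (x1,t1)) * cub t1 (gy t1) c1 c2 c3 (snd (x1,t1))
              \<le> u w - cub x1 (fx x1) q1 (-Kf/2) 0 (fst w) * cub t1 (gy t1) c1 c2 c3 (snd w)"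
    proof
      fix w assume w: "w \<in> N"
      obtain x y where wxy: "w = (x,y)" by fastforce
      have x: "x \<in> {a<..<a+s}" and y: "y \<in> {b<..<b+e}" and Rx: "Rf x > 0" using w unfolding wxy N_def by auto
      have "Rf x * cub t1 (gy t1) c1 c2 c3 y \<le> Rf x * gy y"
        using H y Rx by (intro mult_left_mono) (auto simp: cub_def)
      also have "\<dots> \<le> fx x * gy y" using Rfle[of x] x gynn[of y] y e by (intro mult_right_mono) auto
      also have "\<dots> = u w" unfolding wxy using N(3) w wxy by (intro sep[symmetric]) auto
      finally show "u (x1,t1) - cub x1 (fx x1) q1 (-Kf/2) 0 (fst (x1,t1)) * cub t1 (gy t1) c1 c2 c3 (snd (x1,t1))
              \<le> u w - cub x1 (fx x1) q1 (-Kf/2) 0 (fst w) * cub t1 (gy t1) c1 c2 c3 (snd w)"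
        using sep[of x1 t1] N(2,3) unfolding wxy Rf_def by auto
    qed
    from super_prod[OF vsup N this]
    have P: "pucci_plus lam Lam ((-Kf) * gy t1) (q1*c1) (fx x1 * (2*c2)) + \<mu>*(fx x1*gy t1) \<le> 0"
      using sep[of x1 t1] N(2,3) by auto
    have "lam*((-Kf) * gy t1 + fx x1 * (2*c2)) \<le> pucci_plus lam Lam ((-Kf) * gy t1) (q1*c1) (fx x1 * (2*c2))"
      by (rule pucci_P2) (use lam lL in auto)
    moreover have "\<mu>*(fx x1*gy t1) \<ge> 0" using mu gynn[of t1] t1 e fxx1 by auto
    ultimately have "lam*((-Kf) * gy t1 + fx x1 * (2*c2)) \<le> 0" using P by linarith
    then have "fx x1 * (2*c2) \<le> Kf * gy t1" using lam by (simp add: mult_le_0_iff)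
    then have "2*c2 \<le> Kf * gy t1 / fx x1" using fxx1 by (simp add: field_simps)
    also have "\<dots> \<le> Khg * gy t1" unfolding Khg_def using gynn[of t1] t1 e fxx1 by (simp add: field_simps)
    finally show ?thesis .
  qed
  obtain cg \<eta>g where cg: "cg > 0" "\<eta>g > 0" "\<eta>g \<le> s/2" "\<forall>t\<in>{b..b+\<eta>g}. cg*(t-b) \<le> gy t"
    using hopf[of "s/2" b gy Khg] s continuous_on_subset[OF cgy] gy0 gypos Khg Hg by (force)

  define \<nu> where "\<nu> = (lam+Lam)/2"
  define \<delta> where "\<delta> = Lam - lam"
  have \<nu>: "\<nu> \<ge> 0" and \<delta>: "\<delta> > 0" unfolding \<nu>_def \<delta>_def using lam lL by auto
  define X where "X = \<nu>*(Kf+Kg)"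
  have X: "X \<ge> 0" unfolding X_def using \<nu> Kf Kg by simp
  define \<epsilon> where "\<epsilon> = \<delta>*cf*cg/(8*(X+1))"
  have \<epsilon>: "\<epsilon> > 0" unfolding \<epsilon>_def using \<delta> cf cg X by simp
  have X\<epsilon>: "X*\<epsilon> \<le> \<delta>*cf*cg/8"
  proof -
    have "(X+1)*\<epsilon> = \<delta>*cf*cg/8" unfolding \<epsilon>_def using X by (simp add: field_simps)
    moreover have "X*\<epsilon> \<le> (X+1)*\<epsilon>" using \<epsilon> by simp
    ultimately show ?thesis by simp
  qed
  have amem: "a \<in> {a..a+s}" and bmem: "b \<in> {b..b+s}" using s by auto
  obtain df where df: "df > 0" "\<forall>x\<in>{a..a+s}. dist x a < df \<longrightarrow> dist (fx x) (fx a) < \<epsilon>"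
    using cfx[unfolded continuous_on_iff, rule_format, OF amem \<epsilon>] by blast
  obtain dg where dg: "dg > 0" "\<forall>y\<in>{b..b+s}. dist y b < dg \<longrightarrow> dist (gy y) (gy b) < \<epsilon>"
    using cgy[unfolded continuous_on_iff, rule_format, OF bmem \<epsilon>] by blast
  define \<eta> where "\<eta> = min (min \<eta>f \<eta>g) (min (min (df/2) (dg/2)) (min (cf/(Kf+1)) (cg/(Kg+1))))"
  have \<eta>: "\<eta> > 0" "\<eta> \<le> \<eta>f" "\<eta> \<le> \<eta>g" "\<eta> < df" "\<eta> < dg" "\<eta> \<le> cf/(Kf+1)" "\<eta> \<le> cg/(Kg+1)"
    unfolding \<eta>_def using cf cg df dg Kf Kg by auto
  have \<eta>s: "\<eta> \<le> s" using \<eta> cf(3) s by linarith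
  have Kf\<eta>: "Kf*\<eta> \<le> cf"
  proof -
    have "(Kf+1)*\<eta> \<le> cf" using \<eta>(6) Kf by (simp add: field_simps)
    then show ?thesis using \<eta>(1) by (simp add: algebra_simps)
  qed
  have Kg\<eta>: "Kg*\<eta> \<le> cg"
  proof -
    have "(Kg+1)*\<eta> \<le> cg" using \<eta>(7) Kg by (simp add: field_simps)
    then show ?thesis using \<eta>(1) by (simp add: algebra_simps)
  qed
  obtain xa where xa: "xa \<in> {a<..<a+\<eta>}" "\<forall>t\<in>{a..a+\<eta>}. fx xa + (fx(a+\<eta>)/\<eta> + Kf/2*(2*a+\<eta>-2*xa))*(t-xa) - Kf/2*(t-xa)^2 \<le> fx t"
    using Tf[OF \<eta>(1) \<eta>s] by blast
  obtain ya where ya: "ya \<in> {b<..<b+\<eta>}" "\<forall>t\<in>{b..b+\<eta>}. gy ya + (gy(b+\<eta>)/\<eta> + Kg/2*(2*b+\<eta>-2*ya))*(t-ya) - Kg/2*(t-ya)^2 \<le> gy t"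
    using Tg[OF \<eta>(1) \<eta>s] by blast
  define slf where "slf = fx(a+\<eta>)/\<eta> + Kf/2*(2*a+\<eta>-2*xa)"
  define slg where "slg = gy(b+\<eta>)/\<eta> + Kg/2*(2*b+\<eta>-2*ya)"
  have slf: "slf \<ge> cf/2"
  proof -
    have "cf*\<eta> \<le> fx (a+\<eta>)" using cf(4)[rule_format, of "a+\<eta>"] \<eta> by auto
    then have "cf \<le> fx(a+\<eta>)/\<eta>" using \<eta>(1) by (simp add: field_simps)
    moreover have "Kf*(2*a+\<eta>-2*xa) \<ge> Kf*(-\<eta>)" using xa(1) Kf by (intro mult_left_mono) auto
    ultimately show ?thesis unfolding slf_def using Kf\<eta> by linarith
  qed
  have slg: "slg \<ge> cg/2"
  proof -
    have "cg*\<eta> \<le> gy (b+\<eta>)" using cg(4)[rule_format, of "b+\<eta>"] \<eta> by auto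
    then have "cg \<le> gy(b+\<eta>)/\<eta>" using \<eta>(1) by (simp add: field_simps)
    moreover have "Kg*(2*b+\<eta>-2*ya) \<ge> Kg*(-\<eta>)" using ya(1) Kg by (intro mult_left_mono) auto
    ultimately show ?thesis unfolding slg_def using Kg\<eta> by linarith
  qed
  define Rg where "Rg = cub ya (gy ya) slg (-Kg/2) 0"
  have Rgle: "Rg t \<le> gy t" if "t \<in> {b..b+\<eta>}" for t using ya(2) that unfolding Rg_def slg_def cub_def by auto
  have Phle: "cub xa (fx xa) slf (-Kf/2) 0 t \<le> fx t" if "t \<in> {a..a+\<eta>}" for t using xa(2) that unfolding slf_def cub_def by auto
  have cRg: "continuous_on UNIV Rg" unfolding Rg_def cub_def by (intro continuous_intros)
  have oRg: "open {y. 0 < Rg y}" using open_Collect_less[OF continuous_on_const cRg] .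
  have gyya: "gy ya > 0" using gypos ya(1) \<eta>s by auto
  have fxxa: "fx xa > 0" using fxpos xa(1) \<eta>s by auto
  define N where "N = {a<..<a+\<eta>} \<times> ({b<..<b+\<eta>} \<inter> {y. 0 < Rg y})"
  have N0: "open N" unfolding N_def by (intro open_Times open_Int oRg open_greaterThanLessThan)
  have N: "open N" "(xa, ya) \<in> N" "N \<subseteq> Q" using N0 unfolding N_def Qd using xa ya \<eta>s gyya
    by (auto simp: Rg_def)
  have "\<forall>w\<in>N. u (xa,ya) - cub xa (fx xa) slf (-Kf/2) 0 (fst (xa,ya)) * cub ya (gy ya) slg (-Kg/2) 0 (snd (xa,ya))
            \<le> u w - cub xa (fx xa) slf (-Kf/2) 0 (fst w) * cub ya (gy ya) slg (-Kg/2) 0 (snd w)"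
  proof
    fix w assume w: "w \<in> N"
    obtain x y where wxy: "w = (x,y)" by fastforce
    have x: "x \<in> {a<..<a+\<eta>}" and y: "y \<in> {b<..<b+\<eta>}" and Ry: "Rg y > 0" using w unfolding wxy N_def by auto
    have "cub xa (fx xa) slf (-Kf/2) 0 x * Rg y \<le> fx x * Rg y"
      using Phle[of x] x Ry by (intro mult_right_mono) auto
    also have "\<dots> \<le> fx x * gy y" using Rgle[of y] y fxnn[of x] x \<eta>s by (intro mult_left_mono) auto
    also have "\<dots> = u w" unfolding wxy using N(3) w wxy by (intro sep[symmetric]) auto
    finally show "u (xa,ya) - cub xa (fx xa) slf (-Kf/2) 0 (fst (xa,ya)) * cub ya (gy ya) slg (-Kg/2) 0 (snd (xa,ya))
            \<le> u w - cub xa (fx xa) slf (-Kf/2) 0 (fst w) * cub ya (gy ya) slg (-Kg/2) 0 (snd w)"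
      using sep[of xa ya] N(2,3) unfolding wxy Rg_def by auto
  qed
  from super_prod[OF vsup N this]
  have P: "pucci_plus lam Lam ((-Kf) * gy ya) (slf * slg) (fx xa * (-Kg)) + \<mu>*(fx xa*gy ya) \<le> 0"
    using sep[of xa ya] N(2,3) by auto
  have "\<nu>*((-Kf) * gy ya + fx xa * (-Kg)) + \<delta>*\<bar>slf * slg\<bar> \<le> pucci_plus lam Lam ((-Kf) * gy ya) (slf * slg) (fx xa * (-Kg))"
    unfolding \<nu>_def \<delta>_def by (rule pucci_P1) (use lam lL in auto)
  moreover have "\<mu>*(fx xa*gy ya) \<ge> 0" using mu fxxa gyya by auto
  ultimately have A1: "\<delta>*\<bar>slf * slg\<bar> \<le> \<nu>*(Kf * gy ya + Kg * fx xa)" using P by (simp add: algebra_simps)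
  have "dist (fx xa) (fx a) < \<epsilon>" using df(2)[rule_format, of xa] xa(1) \<eta>s \<eta>(4) by (auto simp: dist_real_def)
  then have fxe: "fx xa < \<epsilon>" using fx0 by (simp add: dist_real_def)
  have "dist (gy ya) (gy b) < \<epsilon>" using dg(2)[rule_format, of ya] ya(1) \<eta>s \<eta>(5) by (auto simp: dist_real_def)
  then have gye: "gy ya < \<epsilon>" using gy0 by (simp add: dist_real_def)
  have "Kf * gy ya + Kg * fx xa \<le> Kf*\<epsilon> + Kg*\<epsilon>"
    using fxe gye Kf Kg by (intro add_mono mult_left_mono) auto
  then have "\<nu>*(Kf * gy ya + Kg * fx xa) \<le> \<nu>*(Kf*\<epsilon> + Kg*\<epsilon>)" using \<nu> by (rule mult_left_mono)
  also have "\<dots> = X*\<epsilon>" unfolding X_def by (simp add: algebra_simps)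
  finally have A3: "\<nu>*(Kf * gy ya + Kg * fx xa) \<le> X*\<epsilon>" .
  with A1 X\<epsilon> A3 have A2: "\<delta>*\<bar>slf * slg\<bar> \<le> \<delta>*cf*cg/8" by linarith
  have "cf/2*(cg/2) \<le> slf * slg" using slf slg cf cg by (intro mult_mono) auto
  then have "cf/2*(cg/2) \<le> \<bar>slf * slg\<bar>" by linarith
  then have "\<delta>*(cf/2*(cg/2)) \<le> \<delta>*\<bar>slf * slg\<bar>" using \<delta> by (intro mult_left_mono) auto
  with A2 have "\<delta>*(cf*cg)/4 \<le> \<delta>*(cf*cg)/8" by (simp add: algebra_simps)
  moreover have "\<delta>*(cf*cg) > 0" using \<delta> cf cg by simp
  ultimately show False by simp
qed

end
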